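(* Let $G=(V,E)$ be a directed graph without parallel edges, with integer edge capacities in $\{1,\dots,U\}$ and root $r\in V$, and let $\lambda$ be the capacity of a minimum $r$-cut. Let $k$ be the minimum number of vertices in a sink component of a minimum $r$-cut. Then either $k=1$ or $\lambda< Uk$.
   Context: For a nonempty set $T\subseteq V\setminus\{r\}$, the $r$-cut with sink component $T$ is the set of edges with head in $T$ and tail outside $T$; its capacity is the total capacity of these edges. A minimum $r$-cut is an $r$-cut of minimum capacity. *)

theory Defs
  imports Main
begin

text \<open>A directed graph without parallel edges: finite vertex set V, edge set E \<subseteq> V \<times> V.
  The r-cut with sink component T is the set of edges with head in T and tail outside T.\<close>

definition rcut :: "('a \<times> 'a) set \<Rightarrow> 'a set \<Rightarrow> ('a \<times> 'a) set" where
  "rcut E T = {(u, v) \<in> E. v \<in> T \<and> u \<notin> T}"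

definition cut_cap :: "('a \<times> 'a) set \<Rightarrow> ('a \<times> 'a \<Rightarrow> nat) \<Rightarrow> 'a set \<Rightarrow> nat" where
  "cut_cap E c T = (\<Sum>e\<in>rcut E T. c e)"

definition sink_sets :: "'a set \<Rightarrow> 'a \<Rightarrow> 'a set set" where
  "sink_sets V r = {T. T \<subseteq> V - {r} \<and> T \<noteq> {}}"

definition min_rcut_value :: "'a set \<Rightarrow> ('a \<times> 'a) set \<Rightarrow> ('a \<times> 'a \<Rightarrow> nat) \<Rightarrow> 'a \<Rightarrow> nat" where
  "min_rcut_value V E c r = Min (cut_cap E c ` sink_sets V r)"

definition is_min_rcut_sink :: "'a set \<Rightarrow> ('a \<times> 'a) set \<Rightarrow> ('a \<times> 'a \<Rightarrow> nat) \<Rightarrow> 'a \<Rightarrow> 'a set \<Rightarrow> bool" where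
  "is_min_rcut_sink V E c r T \<longleftrightarrow> T \<in> sink_sets V r \<and> cut_cap E c T = min_rcut_value V E c r"

definition min_sink_size :: "'a set \<Rightarrow> ('a \<times> 'a) set \<Rightarrow> ('a \<times> 'a \<Rightarrow> nat) \<Rightarrow> 'a \<Rightarrow> nat" where
  "min_sink_size V E c r = Min {card T | T. is_min_rcut_sink V E c r T}"

end

theory Submission
  imports Defs
begin

lemma split_sum:
  assumes fE: "finite E" and fT: "finite T"
  shows "(\<Sum>v\<in>T. cut_cap E c {v}) = cut_cap E c T + (\<Sum>e\<in>{(u,v)\<in>E. u \<in> T \<and> v \<in> T \<and> u \<noteq> v}. c e)"
proof -
  have "(\<Sum>v\<in>T. cut_cap E c {v}) = (\<Sum>e\<in>(\<Union>v\<in>T. rcut E {v}). c e)"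
    unfolding cut_cap_def
    by (rule sum.UNION_disjoint[symmetric]) (auto simp: fT rcut_def intro: finite_subset[OF _ fE])
  also have "(\<Union>v\<in>T. rcut E {v}) = rcut E T \<union> {(u,v)\<in>E. u \<in> T \<and> v \<in> T \<and> u \<noteq> v}"
    by (auto simp: rcut_def)
  also have "(\<Sum>e\<in>rcut E T \<union> {(u,v)\<in>E. u \<in> T \<and> v \<in> T \<and> u \<noteq> v}. c e)
      = cut_cap E c T + (\<Sum>e\<in>{(u,v)\<in>E. u \<in> T \<and> v \<in> T \<and> u \<noteq> v}. c e)"
    unfolding cut_cap_def
    by (rule sum.union_disjoint) (auto simp: rcut_def intro: finite_subset[OF _ fE])
  finally show ?thesis .
qed

theorem lemma2p2:
  fixes V :: "'a set" and E :: "('a \<times> 'a) set" and c :: "'a \<times> 'a \<Rightarrow> nat"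
    and r :: 'a and U :: nat
  assumes "finite V"
    and "E \<subseteq> V \<times> V"
    and "r \<in> V"
    and "V - {r} \<noteq> {}"
    and "U \<ge> 1"
    and "\<And>e. e \<in> E \<Longrightarrow> 1 \<le> c e \<and> c e \<le> U"
  shows "min_sink_size V E c r = 1 \<or> min_rcut_value V E c r < U * min_sink_size V E c r"
proof -
  define lam where "lam = min_rcut_value V E c r"
  have fE: "finite E" using assms(1,2) finite_subset by blast
  have fS: "finite (sink_sets V r)" unfolding sink_sets_def
    using assms(1) by (auto intro: finite_subset[of _ "Pow V"])
  have neS: "sink_sets V r \<noteq> {}" unfolding sink_sets_def using assms(4) by auto
  have lam_le: "lam \<le> cut_cap E c T" if "T \<in> sink_sets V r" for T
    unfolding lam_def min_rcut_value_def using fS that by simp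
  have "lam \<in> cut_cap E c ` sink_sets V r"
    unfolding lam_def min_rcut_value_def using fS neS by simp
  then obtain T0 where T0: "is_min_rcut_sink V E c r T0"
    unfolding is_min_rcut_sink_def lam_def by auto
  define K where "K = {card T | T. is_min_rcut_sink V E c r T}"
  have fK: "finite K"
  proof -
    have "K \<subseteq> card ` sink_sets V r" unfolding K_def is_min_rcut_sink_def by auto
    thus ?thesis using fS finite_subset by blast
  qed
  have "K \<noteq> {}" unfolding K_def using T0 by auto
  hence "min_sink_size V E c r \<in> K" unfolding min_sink_size_def K_def[symmetric] using fK by simp
  then obtain T where T: "is_min_rcut_sink V E c r T" and kT: "min_sink_size V E c r = card T"
    unfolding K_def by auto
  define k where "k = card T"
  have kmin: "k \<le> card S" if "is_min_rcut_sink V E c r S" for S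
  proof -
    have "card S \<in> K" unfolding K_def using that by auto
    thus ?thesis unfolding k_def kT[symmetric] min_sink_size_def K_def[symmetric] using fK by simp
  qed
  have TS: "T \<subseteq> V - {r}" "T \<noteq> {}" using T unfolding is_min_rcut_sink_def sink_sets_def by auto
  have fT: "finite T" using TS assms(1) finite_subset by blast
  have capT: "cut_cap E c T = lam" using T unfolding is_min_rcut_sink_def lam_def by simp
  have k1: "k \<ge> 1" using fT TS k_def by (simp add: Suc_le_eq card_gt_0_iff)
  show ?thesis
  proof (cases "k = 1")
    case True thus ?thesis using kT k_def by simp
  next
    case False
    hence k2: "k \<ge> 2" using k1 by simp
    have single: "lam + 1 \<le> cut_cap E c {v}" if "v \<in> T" for v
    proof -
      have vs: "{v} \<in> sink_sets V r" using that TS unfolding sink_sets_def by auto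
      have "cut_cap E c {v} \<noteq> lam"
      proof
        assume "cut_cap E c {v} = lam"
        hence "is_min_rcut_sink V E c r {v}" using vs unfolding is_min_rcut_sink_def lam_def by simp
        from kmin[OF this] False k1 show False by simp
      qed
      thus ?thesis using lam_le[OF vs] by simp
    qed
    define I where "I = {(u,v)\<in>E. u \<in> T \<and> v \<in> T \<and> u \<noteq> v}"
    have "k * (lam + 1) = (\<Sum>v\<in>T. lam + 1)" by (simp add: k_def)
    also have "\<dots> \<le> (\<Sum>v\<in>T. cut_cap E c {v})" by (rule sum_mono) (rule single)
    also have "\<dots> = lam + (\<Sum>e\<in>I. c e)" using split_sum[OF fE fT, of c] capT I_def by simp
    finally have A: "k * (lam + 1) \<le> lam + (\<Sum>e\<in>I. c e)" .
    have IS: "I \<subseteq> T \<times> T - Id" unfolding I_def by auto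
    have fI: "finite I" using IS fT finite_subset by (metis finite_Diff finite_SigmaI)
    have cardTT: "card (T \<times> T - Id) = k * k - k"
    proof -
      have "T \<times> T \<inter> Id = (\<lambda>x. (x,x)) ` T" by auto
      hence "card (T \<times> T \<inter> Id) = k" by (simp add: card_image inj_on_def k_def)
      moreover have "card (T \<times> T - Id) = card (T \<times> T) - card (T \<times> T \<inter> Id)"
        using fT by (intro card_Diff_subset_Int) simp
      ultimately show ?thesis by (simp add: card_cartesian_product k_def)
    qed
    have "(\<Sum>e\<in>I. c e) \<le> (\<Sum>e\<in>I. U)" by (rule sum_mono) (use assms(6) I_def in auto)
    also have "\<dots> = U * card I" by simp
    also have "\<dots> \<le> U * (k * k - k)"
      using card_mono[OF _ IS] fT cardTT by (simp add: finite_SigmaI)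
    finally have B: "(\<Sum>e\<in>I. c e) \<le> U * (k * k - k)" .
    have "lam < U * k"
    proof (rule ccontr)
      assume "\<not> lam < U * k"
      hence "U * k \<le> lam" by simp
      obtain j where kj: "k = Suc j" using k1 by (cases k) auto
      have C: "j * (U * k) \<le> j * lam" using `U * k \<le> lam` by simp
      have D: "k * (lam + 1) = j * lam + lam + k" by (simp add: kj algebra_simps)
      have E: "U * (k * k - k) = j * (U * k)" by (simp add: kj algebra_simps)
      have "j * lam + lam + k \<le> lam + j * lam" using A B C D E by linarith
      thus False using k1 by simp
    qed
    thus ?thesis using kT k_def lam_def by simp
  qed
qed

end
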